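(* Let $X,Y$ be metric spaces and equip $X\times Y$ with the $\ell^1$-metric. For any two Borel probability measures $\pi,\pi'$ on $X\times Y$, \[ |\operatorname{dis}\pi-\operatorname{dis}\pi'|\le 2\,d_{\mathrm P}(\pi,\pi'). \]
   Context: For nonempty $S\subset X\times Y$, $\operatorname{dis}S:=\sup\{|d_X(x,x')-d_Y(y,y')|:(x,y),(x',y')\in S\}$, $\operatorname{dis}\emptyset:=\infty$; for a Borel probability measure $\pi$ on $X\times Y$, $\operatorname{dis}\pi:=\inf_S\max\{\operatorname{dis}S,1-\pi(S)\}$ over closed $S\subset X\times Y$. $d_{\mathrm P}$ is the Prohorov metric on the $\ell^1$-product: $d_{\mathrm P}(\mu,\nu):=\inf\{\varepsilon>0:\mu(U_\varepsilon(A))\ge\nu(A)-\varepsilon\ \forall\text{ Borel }A\}$, $U_\varepsilon(A)$ the open $\varepsilon$-neighborhood. *)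

theory Defs
  imports "HOL-Probability.Probability"
begin

definition dist1 :: "('a::metric_space \<times> 'b::metric_space) \<Rightarrow> ('a \<times> 'b) \<Rightarrow> real" where
  "dist1 p q = dist (fst p) (fst q) + dist (snd p) (snd q)"

definition nbhd1 :: "real \<Rightarrow> ('a::metric_space \<times> 'b::metric_space) set \<Rightarrow> ('a \<times> 'b) set" where
  "nbhd1 e A = {p. \<exists>q\<in>A. dist1 p q < e}"

definition dis_set :: "('a::metric_space \<times> 'b::metric_space) set \<Rightarrow> ereal" where
  "dis_set S = (if S = {} then \<infinity> else
     (SUP p\<in>S. SUP q\<in>S. ereal \<bar>dist (fst p) (fst q) - dist (snd p) (snd q)\<bar>))"

definition dis_meas :: "('a::metric_space \<times> 'b::metric_space) measure \<Rightarrow> ereal" where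
  "dis_meas M = (INF S\<in>{S. closed S}. max (dis_set S) (ereal (1 - measure M S)))"

definition prohorov :: "('a::metric_space \<times> 'b::metric_space) measure \<Rightarrow> ('a \<times> 'b) measure \<Rightarrow> real" where
  "prohorov M N = Inf {e. e > 0 \<and> (\<forall>A\<in>sets borel. measure M (nbhd1 e A) \<ge> measure N A - e)}"

end

theory Submission
  imports Defs
begin

lemma dist1_sym: "dist1 p q = dist1 q p"
  unfolding dist1_def by (simp add: dist_commute)

lemma open_nbhd1: "open (nbhd1 e (A::('a::metric_space\<times>'b::metric_space) set))"
proof -
  have "nbhd1 e A = (\<Union>q\<in>A. {p. dist1 p q < e})" unfolding nbhd1_def by auto
  moreover have "open {p. dist1 p q < e}" for q :: "'a\<times>'b"
    unfolding dist1_def by (intro open_Collect_less continuous_intros)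
  ultimately show ?thesis by auto
qed

lemma dis_set_le_iff:
  assumes "S \<noteq> {}"
  shows "dis_set S \<le> ereal c \<longleftrightarrow> (\<forall>p\<in>S. \<forall>q\<in>S. \<bar>dist (fst p) (fst q) - dist (snd p) (snd q)\<bar> \<le> c)"
  using assms unfolding dis_set_def by (simp add: SUP_le_iff)

lemma closed_dis:
  "closed {z::('a::metric_space\<times>'b::metric_space)\<times>('a\<times>'b). \<bar>dist (fst (fst z)) (fst (snd z)) - dist (snd (fst z)) (snd (snd z))\<bar> \<le> c}"
  by (intro closed_Collect_le continuous_intros)

lemma dis_closure:
  fixes S :: "('a::metric_space\<times>'b::metric_space) set"
  assumes "\<forall>p\<in>S. \<forall>q\<in>S. \<bar>dist (fst p) (fst q) - dist (snd p) (snd q)\<bar> \<le> c"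
  shows "\<forall>p\<in>closure S. \<forall>q\<in>closure S. \<bar>dist (fst p) (fst q) - dist (snd p) (snd q)\<bar> \<le> c"
proof -
  let ?C = "{z::('a\<times>'b)\<times>('a\<times>'b). \<bar>dist (fst (fst z)) (fst (snd z)) - dist (snd (fst z)) (snd (snd z))\<bar> \<le> c}"
  have "\<forall>p\<in>S. \<forall>q\<in>S. (p,q) \<in> ?C" using assms by simp
  then have "S \<times> S \<subseteq> ?C" by blast
  then have "closure (S \<times> S) \<subseteq> ?C" using closed_dis by (rule closure_minimal)
  then have "closure S \<times> closure S \<subseteq> ?C" by (simp add: closure_Times)
  then show ?thesis by fastforce
qed

lemma dis_nbhd:
  fixes S :: "('a::metric_space\<times>'b::metric_space) set"
  assumes "\<forall>p\<in>S. \<forall>q\<in>S. \<bar>dist (fst p) (fst q) - dist (snd p) (snd q)\<bar> \<le> d"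
  shows "\<forall>p\<in>nbhd1 e S. \<forall>q\<in>nbhd1 e S. \<bar>dist (fst p) (fst q) - dist (snd p) (snd q)\<bar> \<le> d + 2*e"
proof (intro ballI)
  fix p q assume "p \<in> nbhd1 e S" "q \<in> nbhd1 e S"
  then obtain p0 q0 where p0: "p0 \<in> S" "dist1 p p0 < e" and q0: "q0 \<in> S" "dist1 q q0 < e"
    unfolding nbhd1_def by auto
  have h: "\<bar>dist (fst p0) (fst q0) - dist (snd p0) (snd q0)\<bar> \<le> d" using assms p0 q0 by auto
  have t1: "dist (fst p) (fst q) \<le> dist (fst p) (fst p0) + dist (fst p0) (fst q0) + dist (fst q0) (fst q)"
    by (meson dist_triangle order.trans add_right_mono)
  have t2: "dist (fst p0) (fst q0) \<le> dist (fst p0) (fst p) + dist (fst p) (fst q) + dist (fst q) (fst q0)"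
    by (meson dist_triangle order.trans add_right_mono)
  have t3: "dist (snd p) (snd q) \<le> dist (snd p) (snd p0) + dist (snd p0) (snd q0) + dist (snd q0) (snd q)"
    by (meson dist_triangle order.trans add_right_mono)
  have t4: "dist (snd p0) (snd q0) \<le> dist (snd p0) (snd p) + dist (snd p) (snd q) + dist (snd q) (snd q0)"
    by (meson dist_triangle order.trans add_right_mono)
  show "\<bar>dist (fst p) (fst q) - dist (snd p) (snd q)\<bar> \<le> d + 2*e"
    using t1 t2 t3 t4 h p0(2) q0(2) unfolding dist1_def
    by (simp add: dist_commute abs_le_iff)
qed

lemma prohorov_sym:
  fixes M N :: "('a::metric_space \<times> 'b::metric_space) measure"
  assumes "prob_space M" and "sets M = sets borel"
    and "prob_space N" and "sets N = sets borel"
    and H: "\<forall>A\<in>sets borel. measure M (nbhd1 e A) \<ge> measure N A - e"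
  shows "\<forall>A\<in>sets borel. measure N (nbhd1 e A) \<ge> measure M A - e"
proof
  fix A :: "('a\<times>'b) set" assume A: "A \<in> sets borel"
  interpret M: prob_space M by fact
  interpret N: prob_space N by fact
  have spM: "space M = UNIV" using assms(2) by (metis sets_eq_imp_space_eq space_borel)
  have spN: "space N = UNIV" using assms(4) by (metis sets_eq_imp_space_eq space_borel)
  define B where "B = UNIV - nbhd1 e A"
  have Bb: "B \<in> sets borel" unfolding B_def using borel_comp[OF borel_open[OF open_nbhd1[of e A]]] by (simp add: Compl_eq_Diff_UNIV)
  have nb: "nbhd1 e A \<in> sets borel" using borel_open[OF open_nbhd1] by blast
  have sub: "nbhd1 e B \<subseteq> UNIV - A"
  proof
    fix x assume "x \<in> nbhd1 e B"
    then obtain y where y: "y \<in> B" "dist1 x y < e" unfolding nbhd1_def by auto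
    have "x \<notin> A"
    proof
      assume "x \<in> A"
      then have "y \<in> nbhd1 e A" using y(2) dist1_sym[of y x] unfolding nbhd1_def by (intro CollectI bexI[of _ x]) auto
      then show False using y(1) unfolding B_def by auto
    qed
    then show "x \<in> UNIV - A" by simp
  qed
  have "measure M (nbhd1 e B) \<le> measure M (UNIV - A)"
  proof (rule M.finite_measure_mono[OF sub])
    show "UNIV - A \<in> sets M" using borel_comp[OF A] assms(2) by (simp add: Compl_eq_Diff_UNIV)
  qed
  also have "\<dots> = 1 - measure M A" using M.prob_compl[of A] A assms(2) spM by simp
  finally have 1: "measure M (nbhd1 e B) \<le> 1 - measure M A" .
  have "measure N B = 1 - measure N (nbhd1 e A)"
    using N.prob_compl[of "nbhd1 e A"] nb assms(4) spN unfolding B_def by simp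
  moreover have "measure M (nbhd1 e B) \<ge> measure N B - e" using H Bb by blast
  ultimately show "measure N (nbhd1 e A) \<ge> measure M A - e" using 1 by linarith
qed

lemma dir:
  fixes M N :: "('a::metric_space \<times> 'b::metric_space) measure"
  assumes "prob_space M" and "sets M = sets borel"
    and "prob_space N" and "sets N = sets borel" and e: "e > 0"
    and H: "\<forall>A\<in>sets borel. measure M (nbhd1 e A) \<ge> measure N A - e"
  shows "dis_meas M \<le> dis_meas N + ereal (2*e)"
proof -
  interpret M: prob_space M by fact
  have key: "dis_meas M \<le> max (dis_set S) (ereal (1 - measure N S)) + ereal (2*e)"
    if S: "closed S" for S
  proof (cases "S = {} \<or> dis_set S = \<infinity>")
    case True
    then have "dis_set S = \<infinity>" by (cases "S = {}") (auto simp: dis_set_def)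
    then show ?thesis by simp
  next
    case False
    then have ne: "S \<noteq> {}" and fin: "dis_set S \<noteq> \<infinity>" by auto
    obtain p where p: "p \<in> S" using ne by auto
    have "ereal 0 \<le> dis_set S" using p unfolding dis_set_def
      by (auto intro!: SUP_upper2[of p] SUP_upper2[of p] simp: ne)
    then obtain d where d: "dis_set S = ereal d" using fin by (cases "dis_set S") auto
    have dS: "\<forall>p\<in>S. \<forall>q\<in>S. \<bar>dist (fst p) (fst q) - dist (snd p) (snd q)\<bar> \<le> d"
      using dis_set_le_iff[OF ne, of d] d by simp
    define S' where "S' = closure (nbhd1 e S)"
    have "S \<subseteq> nbhd1 e S" using e unfolding nbhd1_def dist1_def by force
    then have ne': "S' \<noteq> {}" using ne closure_subset unfolding S'_def by blast
    have "\<forall>p\<in>S'. \<forall>q\<in>S'. \<bar>dist (fst p) (fst q) - dist (snd p) (snd q)\<bar> \<le> d + 2*e"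
      unfolding S'_def by (intro dis_closure dis_nbhd dS)
    then have 1: "dis_set S' \<le> ereal (d + 2*e)" using dis_set_le_iff[OF ne'] by simp
    have "measure M S' \<ge> measure M (nbhd1 e S)"
      unfolding S'_def using assms(2) by (intro M.finite_measure_mono closure_subset) auto
    moreover have "measure M (nbhd1 e S) \<ge> measure N S - e" using H S by auto
    ultimately have 2: "ereal (1 - measure M S') \<le> ereal (1 - measure N S + e)" by simp
    have "dis_meas M \<le> max (dis_set S') (ereal (1 - measure M S'))"
      unfolding dis_meas_def S'_def by (intro INF_lower) auto
    also have "\<dots> \<le> max (ereal (d + 2*e)) (ereal (1 - measure N S + e))"
      using 1 2 by (rule max.mono)
    also have "\<dots> \<le> max (dis_set S) (ereal (1 - measure N S)) + ereal (2*e)"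
      using e by (simp add: d ereal_max[symmetric] del: ereal_max)
    finally show ?thesis .
  qed
  have "dis_meas M - ereal (2*e) \<le> dis_meas N"
    unfolding dis_meas_def[of N]
  proof (rule INF_greatest)
    fix S :: "('a\<times>'b) set" assume "S \<in> {S. closed S}"
    then show "dis_meas M - ereal (2*e) \<le> max (dis_set S) (ereal (1 - measure N S))"
      using key[of S] by (simp add: ereal_minus_le)
  qed
  then show ?thesis by (simp add: ereal_minus_le)
qed

lemma dis_meas_bounds:
  fixes M :: "('a::metric_space \<times> 'b::metric_space) measure"
  assumes "prob_space M"
  shows "0 \<le> dis_meas M" "dis_meas M \<le> 1"
proof -
  interpret M: prob_space M by fact
  show "0 \<le> dis_meas M" unfolding dis_meas_def
  proof (rule INF_greatest)
    fix S :: "('a\<times>'b) set"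
    have "ereal 0 \<le> ereal (1 - measure M S)" using M.prob_le_1[of S] by simp
    then show "0 \<le> max (dis_set S) (ereal (1 - measure M S))" by (simp add: max.coboundedI2 zero_ereal_def)
  qed
  fix p :: "'a\<times>'b"
  have "dis_set {p} = 0" by (simp add: dis_set_def zero_ereal_def)
  then have "max (dis_set {p}) (ereal (1 - measure M {p})) \<le> 1"
    using measure_nonneg[of M "{p}"] by (simp add: one_ereal_def zero_ereal_def)
  then show "dis_meas M \<le> 1" unfolding dis_meas_def
    by (intro INF_lower2[of "{p}"]) auto
qed

theorem lemma4p6:
  fixes M N :: "('a::metric_space \<times> 'b::metric_space) measure"
  assumes "prob_space M" and "sets M = sets borel"
    and "prob_space N" and "sets N = sets borel"
  shows "\<bar>dis_meas M - dis_meas N\<bar> \<le> 2 * ereal (prohorov M N)"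
proof -
  interpret M: prob_space M by fact
  interpret N: prob_space N by fact
  define E where "E = {e. e > 0 \<and> (\<forall>A\<in>sets borel. measure M (nbhd1 e A) \<ge> measure N A - e)}"
  have PE: "prohorov M N = Inf E" unfolding prohorov_def E_def by simp
  have "(2::real) \<in> E" unfolding E_def
  proof (intro CollectI conjI ballI)
    fix A :: "('a\<times>'b) set"
    show "measure M (nbhd1 2 A) \<ge> measure N A - 2"
      using N.prob_le_1[of A] measure_nonneg[of M "nbhd1 2 A"] by linarith
  qed simp
  then have Ene: "E \<noteq> {}" by auto
  have Ebdd: "bdd_below E" unfolding E_def bdd_below_def by (rule exI[of _ 0]) auto
  have inE: "e \<in> E" if "e > prohorov M N" for e
  proof -
    have "\<exists>e0\<in>E. e0 < e" using that PE cInf_less_iff[OF Ene Ebdd] by simp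
    then obtain e0 where e0: "e0 \<in> E" "e0 < e" by blast
    have "measure M (nbhd1 e A) \<ge> measure N A - e" if A: "A \<in> sets borel" for A
    proof -
      have "nbhd1 e0 A \<subseteq> nbhd1 e A" using e0(2) unfolding nbhd1_def by force
      then have "measure M (nbhd1 e0 A) \<le> measure M (nbhd1 e A)"
        using assms(2) borel_open[OF open_nbhd1] by (intro M.finite_measure_mono) auto
      moreover have "measure M (nbhd1 e0 A) \<ge> measure N A - e0" using e0(1) A unfolding E_def by auto
      ultimately show ?thesis using e0(2) by linarith
    qed
    then show ?thesis using e0 unfolding E_def by auto
  qed
  have P0: "prohorov M N \<ge> 0" unfolding PE
    by (rule cInf_greatest[OF Ene]) (auto simp: E_def)
  obtain a where a: "dis_meas M = ereal a"
    using dis_meas_bounds[OF assms(1)] by (cases "dis_meas M") auto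
  obtain b where b: "dis_meas N = ereal b"
    using dis_meas_bounds[OF assms(3)] by (cases "dis_meas N") auto
  have bound: "\<bar>a - b\<bar> \<le> 2 * e" if "e > prohorov M N" for e
  proof -
    have H1: "\<forall>A\<in>sets borel. measure M (nbhd1 e A) \<ge> measure N A - e" and epos: "e > 0"
      using inE[OF that] unfolding E_def by auto
    have H2: "\<forall>A\<in>sets borel. measure N (nbhd1 e A) \<ge> measure M A - e"
      using prohorov_sym[OF assms H1] .
    have "dis_meas M \<le> dis_meas N + ereal (2*e)" using dir[OF assms epos H1] .
    moreover have "dis_meas N \<le> dis_meas M + ereal (2*e)"
      using dir[OF assms(3,4,1,2) epos H2] .
    ultimately show ?thesis using a b by auto
  qed
  have "\<bar>a - b\<bar> \<le> 2 * prohorov M N"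
  proof (rule ccontr)
    assume "\<not> ?thesis"
    then have "\<bar>a - b\<bar> > 2 * prohorov M N" by simp
    moreover have "prohorov M N < (prohorov M N + \<bar>a - b\<bar>/2)/2" using calculation by simp
    ultimately show False using bound[of "(prohorov M N + \<bar>a - b\<bar>/2)/2"] by simp
  qed
  then show ?thesis using a b by simp
qed

end
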